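(* Let $\alpha\ge 2$ be a real number, and let $Q_n=\widehat{P}_n/P_n$ (for $n\ge1$) be as defined in the context. Then the sequence $(Q_n)$ converges to some real number $r_1>1$, and it oscillates around this limit: there are arbitrarily large integers $n$ with $Q_n>r_1$, and arbitrarily large integers $n$ with $Q_n<r_1$.
   Context: For a real number $\alpha\ge 1$, define the integer sequence $(P_i)_{i\ge 0}=(P^\alpha_i)$ by $P_0=0$, $P_1=1$, and for $k\ge 1$, $P_{k+1}=P_k+P_j$, where $j\ge 1$ is the unique index with $\alpha P_{j-1}<P_k\le \alpha P_j$. For $i\ge 1$, the window of $P_i$ is $W_\alpha(P_i)=\{P_j : \alpha P_{i-1}<P_j\le \alpha P_i\}$. Let $\widehat{P}_i$ be the smallest term of the sequence $(P_m)$ that is greater than $\max W_\alpha(P_i)$ (equivalently $\widehat P_i=P_{j+1}$ where $P_j=\max W_\alpha(P_i)$), and set $Q_i=\widehat{P}_i/P_i$. *)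

theory Defs
  imports Complex_Main
begin

text \<open>P_0 = 0, P_1 = 1, P_(k+1) = P_k + P_j where j >= 1 is the unique index with
  a * P_(j-1) < P_k <= a * P_j (such j necessarily satisfies j <= k).\<close>
fun Pl :: "real \<Rightarrow> nat \<Rightarrow> nat list" where
  "Pl a 0 = [0]"
| "Pl a (Suc 0) = [0, 1]"
| "Pl a (Suc (Suc k)) =
     (let xs = Pl a (Suc k); pk = xs ! Suc k;
          j = (THE j. 1 \<le> j \<and> j \<le> Suc k \<and> a * real (xs ! (j - 1)) < real pk
                     \<and> real pk \<le> a * real (xs ! j))
      in xs @ [pk + xs ! j])"

definition P :: "real \<Rightarrow> nat \<Rightarrow> nat" where
  "P a n = Pl a n ! n"

definition window :: "real \<Rightarrow> nat \<Rightarrow> nat set" where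
  "window a i = {P a j | j. a * real (P a (i - 1)) < real (P a j) \<and> real (P a j) \<le> a * real (P a i)}"

definition Phat :: "real \<Rightarrow> nat \<Rightarrow> nat" where
  "Phat a i = (LEAST m. m \<in> range (P a) \<and> Max (window a i) < m)"

definition Q :: "real \<Rightarrow> nat \<Rightarrow> real" where
  "Q a i = real (Phat a i) / real (P a i)"

end

theory Submission
  imports Defs
begin

lemma Pl_snoc: "\<exists>y. Pl a (Suc n) = Pl a n @ [y]"
  by (cases n) (auto simp: Let_def)

lemma Pl_length: "length (Pl a n) = Suc n"
proof (induction n)
  case 0 then show ?case by simp
next
  case (Suc n)
  then show ?case using Pl_snoc[of a n] by auto
qed

lemma Pl_nth: "m \<le> n \<Longrightarrow> Pl a n ! m = P a m"
proof (induction n)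
  case 0 then show ?case by (simp add: P_def)
next
  case (Suc n)
  obtain y where y: "Pl a (Suc n) = Pl a n @ [y]" using Pl_snoc by blast
  show ?case
  proof (cases "m = Suc n")
    case True then show ?thesis by (simp add: P_def)
  next
    case False
    then have "m \<le> n" using Suc.prems by simp
    then show ?thesis using Suc.IH y Pl_length[of a n] by (simp add: nth_append)
  qed
qed

lemma P_0: "P a 0 = 0" by (simp add: P_def)
lemma P_1: "P a 1 = 1" by (simp add: P_def)
lemma P_Suc0: "P a (Suc 0) = 1" by (simp add: P_def)

lemma P_SS_raw: "P a (Suc (Suc k)) = P a (Suc k) + Pl a (Suc k) ! (THE j. 1 \<le> j \<and> j \<le> Suc k \<and> a * real (Pl a (Suc k) ! (j - 1)) < real (Pl a (Suc k) ! Suc k) \<and> real (Pl a (Suc k) ! Suc k) \<le> a * real (Pl a (Suc k) ! j))"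
  by (simp add: P_def Let_def nth_append Pl_length)

lemma P_Suc_ge: "P a k \<le> P a (Suc k)"
proof (cases k)
  case 0 then show ?thesis by (simp add: P_0)
next
  case (Suc k') then show ?thesis using P_SS_raw[of a k'] by simp
qed

lemma P_mono: "m \<le> n \<Longrightarrow> P a m \<le> P a n"
  by (rule lift_Suc_mono_le[of "P a"]) (auto simp: P_Suc_ge)

lemma P_pos: "k \<ge> 1 \<Longrightarrow> P a k \<ge> 1"
  using P_mono[of 1 k a] by (simp add: P_Suc0)

definition jc :: "real \<Rightarrow> nat \<Rightarrow> nat \<Rightarrow> bool" where
  "jc a k j \<longleftrightarrow> 1 \<le> j \<and> a * real (P a (j - 1)) < real (P a k) \<and> real (P a k) \<le> a * real (P a j)"

definition jj :: "real \<Rightarrow> nat \<Rightarrow> nat" where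
  "jj a k = (THE j. jc a k j)"

lemma jc_ex:
  assumes "a \<ge> 1" "k \<ge> 1"
  shows "\<exists>j. j \<le> k \<and> jc a k j"
proof -
  define j0 where "j0 = (LEAST j. real (P a k) \<le> a * real (P a j))"
  have pk: "real (P a k) \<le> a * real (P a k)" using mult_right_mono[OF assms(1), of "real (P a k)"] by simp
  have h1: "real (P a k) \<le> a * real (P a j0)" unfolding j0_def by (rule LeastI[of _ k]) (rule pk)
  have h2: "j0 \<le> k" unfolding j0_def by (rule Least_le) (rule pk)
  have pos: "real (P a k) \<ge> 1" using P_pos[OF assms(2)] by simp
  have h3: "j0 \<noteq> 0"
  proof
    assume "j0 = 0" with h1 pos show False by (simp add: P_0)
  qed
  have "\<not> real (P a k) \<le> a * real (P a (j0 - 1))"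
    unfolding j0_def by (rule not_less_Least) (use h3 j0_def in auto)
  then show ?thesis using h1 h2 h3 unfolding jc_def by (intro exI[of _ j0]) auto
qed

lemma jc_uniq:
  assumes "a \<ge> 0" "jc a k j1" "jc a k j2"
  shows "j1 = j2"
proof (rule ccontr)
  assume "j1 \<noteq> j2"
  then consider "j1 < j2" | "j2 < j1" by linarith
  then show False
  proof cases
    case 1
    then have "P a j1 \<le> P a (j2 - 1)" by (intro P_mono) auto
    then have "a * real (P a j1) \<le> a * real (P a (j2 - 1))" using assms(1) by (intro mult_left_mono) auto
    then show False using assms(2,3) unfolding jc_def by linarith
  next
    case 2
    then have "P a j2 \<le> P a (j1 - 1)" by (intro P_mono) auto
    then have "a * real (P a j2) \<le> a * real (P a (j1 - 1))" using assms(1) by (intro mult_left_mono) auto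
    then show False using assms(2,3) unfolding jc_def by linarith
  qed
qed

lemma jj_prop:
  assumes "a \<ge> 1" "k \<ge> 1"
  shows "jc a k (jj a k)" "jj a k \<le> k"
proof -
  obtain j where j: "j \<le> k" "jc a k j" using jc_ex[OF assms] by blast
  have "jj a k = j" unfolding jj_def
  proof (rule the_equality[where P="jc a k", OF j(2)])
    fix x assume "jc a k x" then show "x = j" using jc_uniq[of a k x j] j(2) assms(1) by simp
  qed
  then show "jc a k (jj a k)" "jj a k \<le> k" using j by auto
qed

lemma jj_eq:
  assumes "a \<ge> 1" "k \<ge> 1" "jc a k j"
  shows "jj a k = j"
  using jc_uniq[of a k "jj a k" j] jj_prop[OF assms(1,2)] assms by auto

lemma P_SS:
  assumes "a \<ge> 1"
  shows "P a (Suc (Suc k)) = P a (Suc k) + P a (jj a (Suc k))"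
proof -
  have e: "(1 \<le> j \<and> j \<le> Suc k \<and> a * real (Pl a (Suc k) ! (j - 1)) < real (Pl a (Suc k) ! Suc k) \<and> real (Pl a (Suc k) ! Suc k) \<le> a * real (Pl a (Suc k) ! j))
     = (j \<le> Suc k \<and> jc a (Suc k) j)" for j
  proof (cases "j \<le> Suc k")
    case True
    then have "Pl a (Suc k) ! (j - 1) = P a (j - 1)" "Pl a (Suc k) ! j = P a j" "Pl a (Suc k) ! Suc k = P a (Suc k)"
      by (auto intro!: Pl_nth)
    then show ?thesis unfolding jc_def using True by simp
  qed simp
  have t: "(THE j. j \<le> Suc k \<and> jc a (Suc k) j) = jj a (Suc k)"
  proof (rule the_equality)
    show "jj a (Suc k) \<le> Suc k \<and> jc a (Suc k) (jj a (Suc k))" using jj_prop[OF assms, of "Suc k"] by simp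
    fix j assume "j \<le> Suc k \<and> jc a (Suc k) j"
    then show "j = jj a (Suc k)" using jj_eq[OF assms, of "Suc k" j] by simp
  qed
  have "Pl a (Suc k) ! jj a (Suc k) = P a (jj a (Suc k))"
    using jj_prop(2)[OF assms, of "Suc k"] by (simp add: Pl_nth)
  then show ?thesis using P_SS_raw[of a k] unfolding e t by simp
qed

lemma P_step:
  assumes "a \<ge> 1" "k \<ge> 1"
  shows "P a (Suc k) = P a k + P a (jj a k)"
  using P_SS[OF assms(1), of "k - 1"] assms(2) by simp

lemma P_strict: "a \<ge> 1 \<Longrightarrow> P a k < P a (Suc k)"
proof (cases "k = 0")
  case True then show ?thesis by (simp add: P_0 P_Suc0)
next
  case False
  assume a: "a \<ge> 1"
  then have "k \<ge> 1" using False by simp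
  then show ?thesis using P_step[OF a, of k] P_pos[of "jj a k" a] jj_prop[OF a, of k] unfolding jc_def by auto
qed

lemma P_smono: "a \<ge> 1 \<Longrightarrow> strict_mono (P a)"
  unfolding strict_mono_Suc_iff by (auto intro: P_strict)


lemma jj_succ:
  assumes a: "a \<ge> 1" and k: "k \<ge> 1"
  shows "jj a (Suc k) \<le> Suc (jj a k)"
proof (rule ccontr)
  define j where "j = jj a k"
  have jc1: "jc a k j" "j \<le> k" using jj_prop[OF a k] j_def by auto
  then have j1: "j \<ge> 1" and pk: "real (P a k) \<le> a * real (P a j)" unfolding jc_def by auto
  have jcj: "jc a j (jj a j)" using jj_prop[OF a j1] by auto
  then have pj: "real (P a j) \<le> a * real (P a (jj a j))" unfolding jc_def by auto
  have ps: "P a (Suc j) = P a j + P a (jj a j)" using P_step[OF a j1] .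
  have pks: "P a (Suc k) = P a k + P a j" using P_step[OF a k] j_def by simp
  have A: "real (P a (Suc k)) \<le> a * real (P a (Suc j))"
    using ps pks pk pj a by (simp add: algebra_simps)
  assume "\<not> jj a (Suc k) \<le> Suc (jj a k)"
  then have "Suc j \<le> jj a (Suc k) - 1" using j_def by simp
  then have "P a (Suc j) \<le> P a (jj a (Suc k) - 1)" by (rule P_mono)
  then have "a * real (P a (Suc j)) \<le> a * real (P a (jj a (Suc k) - 1))" using a by (intro mult_left_mono) auto
  moreover have "a * real (P a (jj a (Suc k) - 1)) < real (P a (Suc k))"
    using jj_prop(1)[OF a, of "Suc k"] unfolding jc_def by auto
  ultimately show False using A by linarith
qed

lemma delta_mono:
  assumes a: "a \<ge> 1" and k: "k \<ge> 1"
  shows "k - jj a k \<le> Suc k - jj a (Suc k)"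
  using jj_succ[OF a k] jj_prop(2)[OF a k] jj_prop(2)[OF a, of "Suc k"] by simp

lemma growth:
  assumes a: "a \<ge> 1" and k: "k \<ge> 1"
  shows "real (P a (Suc k)) \<ge> (1 + 1 / a) * real (P a k)"
proof -
  have pk: "real (P a k) \<le> a * real (P a (jj a k))" using jj_prop(1)[OF a k] unfolding jc_def by auto
  then have "real (P a k) / a \<le> real (P a (jj a k))" using a by (simp add: divide_le_eq mult.commute)
  then show ?thesis using P_step[OF a k] by (simp add: algebra_simps)
qed

lemma growth_pow:
  assumes a: "a \<ge> 1" and j: "j \<ge> 1"
  shows "real (P a (j + t)) \<ge> (1 + 1 / a) ^ t * real (P a j)"
proof (induction t)
  case 0 then show ?case by simp
next
  case (Suc t)
  have "(1 + 1 / a) ^ Suc t * real (P a j) = (1 + 1/a) * ((1 + 1 / a) ^ t * real (P a j))" by simp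
  also have "\<dots> \<le> (1 + 1/a) * real (P a (j + t))" using Suc a by (intro mult_left_mono) auto
  also have "\<dots> \<le> real (P a (Suc (j + t)))" using growth[OF a, of "j + t"] j by simp
  finally show ?case by simp
qed

lemma delta_bound:
  assumes a: "a \<ge> 1" and k: "k \<ge> 1"
  shows "real (k - jj a k) \<le> a * a"
proof -
  define j where "j = jj a k"
  define t where "t = k - j"
  have jc1: "jc a k j" "j \<le> k" using jj_prop[OF a k] j_def by auto
  then have j1: "j \<ge> 1" and pk: "real (P a k) \<le> a * real (P a j)" unfolding jc_def by auto
  have kk: "k = j + t" using jc1 t_def by simp
  have g: "(1 + 1 / a) ^ t * real (P a j) \<le> real (P a k)" using growth_pow[OF a j1, of t] kk by simp
  have ge: "(0::real) \<le> 1 / a" using a by simp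
  have bern: "1 + real t * (1 / a) \<le> (1 + 1 / a) ^ t" by (rule Bernoulli_inequality) (use ge in linarith)
  have pj: "real (P a j) \<ge> 1" using P_pos[OF j1] by simp
  have "(1 + real t / a) * real (P a j) \<le> (1 + 1 / a) ^ t * real (P a j)"
    using bern pj by (intro mult_right_mono) auto
  then have "(1 + real t / a) * real (P a j) \<le> a * real (P a j)"
    using g pk by linarith
  then have "1 + real t / a \<le> a" using pj by simp
  then have "real t \<le> a * a - a" using a by (simp add: field_simps)
  then show ?thesis using a t_def j_def by simp
qed

lemma delta_eventually:
  assumes a: "a \<ge> 1"
  shows "\<exists>K d. K \<ge> 1 \<and> (\<forall>k\<ge>K. k - jj a k = d)"
proof -
  define f where "f k = Suc k - jj a (Suc k)" for k
  have fm: "f k \<le> f k'" if "k \<le> k'" for k k'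
  proof (rule lift_Suc_mono_le[of f, OF _ that])
    fix n show "f n \<le> f (Suc n)" unfolding f_def by (rule delta_mono[OF a]) simp
  qed
  define B where "B = nat \<lceil>a * a\<rceil>"
  have fb: "f k \<le> B" for k
  proof -
    have "real (f k) \<le> a * a" unfolding f_def by (rule delta_bound[OF a]) simp
    then show ?thesis unfolding B_def by linarith
  qed
  have fin: "finite (range f)" by (rule finite_subset[of _ "{..B}"]) (auto simp: fb)
  define d where "d = Max (range f)"
  have "d \<in> range f" unfolding d_def by (rule Max_in[OF fin]) auto
  then obtain K0 where K0: "f K0 = d" by auto
  have "\<forall>k\<ge>Suc K0. k - jj a k = d"
  proof (intro allI impI)
    fix k assume "Suc K0 \<le> k"
    then obtain k' where k': "k = Suc k'" "K0 \<le> k'" by (cases k) auto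
    have "f k' \<ge> d" using fm[OF k'(2)] K0 by simp
    moreover have "f k' \<le> d" unfolding d_def using fin by (intro Max_ge) auto
    ultimately show "k - jj a k = d" using k' f_def by simp
  qed
  moreover have "Suc K0 \<ge> 1" by simp
  ultimately show ?thesis by blast
qed


lemma eventual_structure:
  assumes a: "a \<ge> 2"
  shows "\<exists>K d. K \<ge> 1 \<and> d \<ge> 1 \<and> (\<forall>k\<ge>K. jj a k = k - d \<and> d < k)"
proof -
  have a1: "a \<ge> 1" using a by simp
  obtain K d where K: "K \<ge> 1" "\<forall>k\<ge>K. k - jj a k = d" using delta_eventually[OF a1] by blast
  have jjk: "jj a k = k - d \<and> d < k" if "k \<ge> K" for k
  proof -
    have "k \<ge> 1" using that K by simp
    then have "jj a k \<le> k" "jj a k \<ge> 1" using jj_prop[OF a1, of k] unfolding jc_def by auto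
    then show ?thesis using K(2) that by auto
  qed
  have d1: "d \<ge> 1"
  proof (rule ccontr)
    assume "\<not> d \<ge> 1"
    then have d0: "d = 0" by simp
    have j1: "jj a (Suc K) = Suc K" using jjk[of "Suc K"] d0 by simp
    have j0: "jj a K = K" using jjk[of K] d0 by simp
    have "a * real (P a K) < real (P a (Suc K))"
      using jj_prop(1)[OF a1, of "Suc K"] j1 unfolding jc_def by simp
    moreover have "P a (Suc K) = P a K + P a K" using P_step[OF a1 K(1)] j0 by simp
    moreover have "real (P a K) \<ge> 1" using P_pos[OF K(1)] by simp
    ultimately have "a * real (P a K) < 2 * real (P a K)" by simp
    then have "a < 2" using \<open>real (P a K) \<ge> 1\<close> by simp
    then show False using a by simp
  qed
  show ?thesis using K(1) d1 jjk by blast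
qed

lemma window_phat:
  assumes a: "a \<ge> 2" and K: "K \<ge> 1" and jjK: "\<forall>k\<ge>K. jj a k = k - d \<and> d < k" and i: "i \<ge> K"
  shows "Q a i = 1 + real (P a (i + d)) / real (P a i)"
    and "P a (Suc (i + d)) = P a (i + d) + P a i"
proof -
  have a1: "a \<ge> 1" using a by simp
  have sm: "strict_mono (P a)" by (rule P_smono[OF a1])
  have i1: "i \<ge> 1" using i K by simp
  have e1: "jj a (i + d) = i" using jjK i by auto
  have e2: "jj a (Suc (i + d)) = Suc i" using jjK i by auto
  have c1: "jc a (i + d) i" using jj_prop(1)[OF a1, of "i + d"] e1 i1 by simp
  have c2: "jc a (Suc (i + d)) (Suc i)" using jj_prop(1)[OF a1, of "Suc (i + d)"] e2 by simp
  from c1 have w1: "a * real (P a (i - 1)) < real (P a (i + d))" "real (P a (i + d)) \<le> a * real (P a i)"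
    unfolding jc_def by auto
  from c2 have w2: "a * real (P a i) < real (P a (Suc (i + d)))" unfolding jc_def by simp
  show rec: "P a (Suc (i + d)) = P a (i + d) + P a i"
    using P_step[OF a1, of "i + d"] e1 i1 by simp
  have fin: "finite (window a i)"
  proof (rule finite_subset[of _ "P a ` {..i + d}"])
    show "window a i \<subseteq> P a ` {..i + d}"
    proof
      fix y assume "y \<in> window a i"
      then obtain j where j: "y = P a j" "real (P a j) \<le> a * real (P a i)" unfolding window_def by auto
      then have "P a j < P a (Suc (i + d))" using w2 by simp
      then have "j < Suc (i + d)" using sm strict_mono_less by blast
      then show "y \<in> P a ` {..i + d}" using j by auto
    qed
  qed simp
  have mx: "Max (window a i) = P a (i + d)"
  proof (rule Max_eqI[OF fin])
    show "P a (i + d) \<in> window a i" unfolding window_def using w1 by auto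
    fix y assume "y \<in> window a i"
    then obtain j where j: "y = P a j" "real (P a j) \<le> a * real (P a i)" unfolding window_def by auto
    then have "P a j < P a (Suc (i + d))" using w2 by simp
    then have "j < Suc (i + d)" using sm strict_mono_less by blast
    then have "P a j \<le> P a (i + d)" by (intro P_mono) simp
    then show "y \<le> P a (i + d)" using j by simp
  qed
  have ph: "Phat a i = P a (Suc (i + d))"
    unfolding Phat_def mx
  proof (rule Least_equality)
    show "P a (Suc (i + d)) \<in> range (P a) \<and> P a (i + d) < P a (Suc (i + d))"
      using P_strict[OF a1] by simp
    fix y assume "y \<in> range (P a) \<and> P a (i + d) < y"
    then obtain j where j: "y = P a j" "P a (i + d) < P a j" by auto
    then have "i + d < j" using sm strict_mono_less by blast
    then have "P a (Suc (i + d)) \<le> P a j" by (intro P_mono) simp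
    then show "P a (Suc (i + d)) \<le> y" using j by simp
  qed
  have pi: "real (P a i) \<ge> 1" using P_pos[OF i1] by simp
  show "Q a i = 1 + real (P a (i + d)) / real (P a i)"
    unfolding Q_def ph rec using pi by (simp add: field_simps)
qed


lemma avg_conv:
  fixes x :: "nat \<Rightarrow> real" and a b :: real
  assumes pos: "\<And>n. x n > 0" and ab: "a > 0" "b > 0" "a + b = 1"
    and rec: "\<And>n. x (n + d + 1) = a * x (n + d) + b * x n"
  shows "(\<lambda>n. x (n + d) / x n) \<longlonglongrightarrow> 1"
proof -
  define mn where "mn n = Min (x ` {n..n+d})" for n
  define mx where "mx n = Max (x ` {n..n+d})" for n
  have fin: "finite (x ` {n..n+d})" "x ` {n..n+d} \<noteq> {}" for n by auto
  have mn_le: "mn n \<le> x k" if "n \<le> k" "k \<le> n + d" for n k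
    unfolding mn_def using that by (intro Min_le) auto
  have mx_ge: "x k \<le> mx n" if "n \<le> k" "k \<le> n + d" for n k
    unfolding mx_def using that by (intro Max_ge) auto
  have new_ge: "mn n \<le> x (n + d + 1)" for n
  proof -
    have h: "mn n \<le> x (n+d)" "mn n \<le> x n" by (rule mn_le; simp)+
    have "a * mn n + b * mn n \<le> a * x (n+d) + b * x n"
      using h ab by (intro add_mono mult_left_mono) auto
    moreover have "a * mn n + b * mn n = mn n" using ab(3) by (metis distrib_right mult_1)
    ultimately show ?thesis using rec[of n] by simp
  qed
  have new_le: "x (n + d + 1) \<le> mx n" for n
  proof -
    have h: "x (n+d) \<le> mx n" "x n \<le> mx n" by (rule mx_ge; simp)+
    have "a * x (n+d) + b * x n \<le> a * mx n + b * mx n"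
      using h ab by (intro add_mono mult_left_mono) auto
    moreover have "a * mx n + b * mx n = mx n" using ab(3) by (metis distrib_right mult_1)
    ultimately show ?thesis using rec[of n] by simp
  qed
  have mn_Suc: "mn n \<le> mn (Suc n)" for n
    unfolding mn_def[of "Suc n"]
  proof (rule Min.boundedI[OF fin])
    fix y assume "y \<in> x ` {Suc n..Suc n + d}"
    then obtain k where k: "y = x k" "Suc n \<le> k" "k \<le> Suc n + d" by auto
    show "mn n \<le> y"
    proof (cases "k \<le> n + d")
      case True then show ?thesis using k mn_le[of n k] by simp
    next
      case False then have "k = n + d + 1" using k by simp
      then show ?thesis using k new_ge[of n] by simp
    qed
  qed
  have mx_Suc: "mx (Suc n) \<le> mx n" for n
    unfolding mx_def[of "Suc n"]
  proof (rule Max.boundedI[OF fin])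
    fix y assume "y \<in> x ` {Suc n..Suc n + d}"
    then obtain k where k: "y = x k" "Suc n \<le> k" "k \<le> Suc n + d" by auto
    show "y \<le> mx n"
    proof (cases "k \<le> n + d")
      case True then show ?thesis using k mx_ge[of n k] by simp
    next
      case False then have "k = n + d + 1" using k by simp
      then show ?thesis using k new_le[of n] by simp
    qed
  qed
  have mn_inc: "incseq mn" by (rule incseq_SucI) (rule mn_Suc)
  have mx_dec: "decseq mx" by (rule decseq_SucI) (rule mx_Suc)
  have mn_x: "mn n \<le> x k" if "n \<le> k" for n k
    using incseqD[OF mn_inc that] mn_le[of k k] by simp
  have mx_x: "x k \<le> mx n" if "n \<le> k" for n k
    using decseqD[OF mx_dec that] mx_ge[of k k] by simp
  have mn_bd: "mn i \<le> mx 0" for i using mn_x[of i i] mx_x[of 0 i] by simp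
  obtain l where l: "mn \<longlonglongrightarrow> l" using incseq_convergent[OF mn_inc] mn_bd by blast
  define c where "c = a ^ d * b"
  have c0: "c > 0" unfolding c_def using ab by simp
  have contr: "c * (mx n - mn n) \<le> mn (n + 2 * d + 1) - mn n" for n
  proof -
    have "mx n \<in> x ` {n..n+d}" unfolding mx_def by (rule Max_in[OF fin])
    then obtain j where j: "n \<le> j" "j \<le> n + d" "x j = mx n" by auto
    define g where "g = mx n - mn n"
    have g0: "g \<ge> 0" unfolding g_def using mn_le[of n n] mx_ge[of n n] by simp
    have step: "a ^ t * b * g \<le> x (j + d + 1 + t) - mn n" for t
    proof (induction t)
      case 0
      have "x (j + d + 1) = a * x (j + d) + b * x j" using rec[of j] .
      moreover have "mn n \<le> x (j + d)" using j by (intro mn_x) simp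
      moreover have "mn n = a * mn n + b * mn n" using ab(3) by (metis distrib_right mult_1)
      ultimately have "x (j + d + 1) - mn n = a * (x (j + d) - mn n) + b * (x j - mn n)"
        by (simp add: algebra_simps)
      moreover have "a * (x (j + d) - mn n) \<ge> 0" using ab \<open>mn n \<le> x (j + d)\<close> by simp
      ultimately show ?case using j(3) g_def by simp
    next
      case (Suc t)
      have e: "x (j + d + 1 + Suc t) = a * x (j + d + 1 + t) + b * x (j + 1 + t)"
        using rec[of "j + 1 + t"] by (simp add: algebra_simps)
      have m1: "mn n \<le> x (j + 1 + t)" using j by (intro mn_x) simp
      have "mn n = a * mn n + b * mn n" using ab(3) by (metis distrib_right mult_1)
      then have "x (j + d + 1 + Suc t) - mn n = a * (x (j + d + 1 + t) - mn n) + b * (x (j + 1 + t) - mn n)"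
        using e by (simp add: algebra_simps)
      moreover have "b * (x (j + 1 + t) - mn n) \<ge> 0" using ab m1 by simp
      moreover have "a * (a ^ t * b * g) \<le> a * (x (j + d + 1 + t) - mn n)"
        using Suc ab by (intro mult_left_mono) auto
      ultimately show ?case by simp
    qed
    have "mn n + c * g \<le> mn (j + d + 1)"
      unfolding mn_def[of "j + d + 1"]
    proof (rule Min.boundedI[OF fin])
      fix y assume "y \<in> x ` {j + d + 1..j + d + 1 + d}"
      then obtain k where k: "y = x k" "j + d + 1 \<le> k" "k \<le> j + d + 1 + d" by auto
      define t where "t = k - (j + d + 1)"
      have kt: "k = j + d + 1 + t" "t \<le> d" using k t_def by auto
      have "a ^ d \<le> a ^ t" using kt(2) ab by (intro power_decreasing) auto
      then have "a ^ d * b * g \<le> a ^ t * b * g" using ab g0 by (intro mult_right_mono) auto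
      then show "mn n + c * g \<le> y" using step[of t] kt k c_def by simp
    qed
    moreover have "mn (j + d + 1) \<le> mn (n + 2 * d + 1)" using j by (intro incseqD[OF mn_inc]) simp
    ultimately show ?thesis unfolding g_def by simp
  qed
  define gap where "gap n = mx n - mn n" for n
  have gap0: "gap n \<ge> 0" for n unfolding gap_def using mn_le[of n n] mx_ge[of n n] by simp
  have gapt: "gap \<longlonglongrightarrow> 0"
  proof (rule tendsto_sandwich[of "\<lambda>_. 0" gap sequentially "\<lambda>n. (mn (n + (2 * d + 1)) - mn n) / c"])
    show "\<forall>\<^sub>F n in sequentially. 0 \<le> gap n" using gap0 by simp
    show "\<forall>\<^sub>F n in sequentially. gap n \<le> (mn (n + (2 * d + 1)) - mn n) / c"
      using contr c0 by (simp add: gap_def pos_le_divide_eq mult.commute add.assoc)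
    show "(\<lambda>_. 0) \<longlonglongrightarrow> (0::real)" by simp
    have "(\<lambda>n. (mn (n + (2 * d + 1)) - mn n) / c) \<longlonglongrightarrow> (l - l) / c"
      by (intro tendsto_intros LIMSEQ_ignore_initial_segment l) (use c0 in simp)
    then show "(\<lambda>n. (mn (n + (2 * d + 1)) - mn n) / c) \<longlonglongrightarrow> 0" by simp
  qed
  define m0 where "m0 = mn 0"
  have m0p: "m0 > 0"
  proof -
    have "mn 0 \<in> x ` {0..0+d}" unfolding mn_def by (rule Min_in[OF fin])
    then show ?thesis using pos m0_def by auto
  qed
  have xm0: "m0 \<le> x n" for n unfolding m0_def by (rule mn_x) simp
  have up: "x (n + d) / x n \<le> 1 + gap n / m0" for n
  proof -
    have xn: "x n > 0" using pos by simp
    have "x (n + d) \<le> x n + gap n" using mx_ge[of n "n + d"] mn_le[of n n] gap_def by simp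
    also have "gap n \<le> x n * (gap n / m0)"
    proof -
      have "gap n * m0 \<le> gap n * x n" using gap0 xm0 by (intro mult_left_mono) auto
      then show ?thesis using m0p by (simp add: le_divide_eq mult.commute)
    qed
    then have "x n + gap n \<le> x n * (1 + gap n / m0)" by (simp add: algebra_simps)
    finally show ?thesis using xn by (simp add: divide_le_eq mult.commute)
  qed
  have lo: "1 - gap n / m0 \<le> x (n + d) / x n" for n
  proof -
    have xn: "x n > 0" using pos by simp
    have "gap n \<le> x n * (gap n / m0)"
    proof -
      have "gap n * m0 \<le> gap n * x n" using gap0 xm0 by (intro mult_left_mono) auto
      then show ?thesis using m0p by (simp add: le_divide_eq mult.commute)
    qed
    then have "x n * (1 - gap n / m0) \<le> x n - gap n" by (simp add: algebra_simps)
    also have "x n - gap n \<le> x (n + d)" using mn_le[of n "n + d"] mx_ge[of n n] gap_def by simp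
    finally show ?thesis using xn by (simp add: le_divide_eq mult.commute)
  qed
  show ?thesis
  proof (rule tendsto_sandwich[of "\<lambda>n. 1 - gap n / m0" _ sequentially "\<lambda>n. 1 + gap n / m0"])
    show "\<forall>\<^sub>F n in sequentially. 1 - gap n / m0 \<le> x (n + d) / x n" using lo by simp
    show "\<forall>\<^sub>F n in sequentially. x (n + d) / x n \<le> 1 + gap n / m0" using up by simp
    show "(\<lambda>n. 1 - gap n / m0) \<longlonglongrightarrow> 1" using tendsto_diff[OF tendsto_const tendsto_divide[OF gapt tendsto_const]] m0p by fastforce
    show "(\<lambda>n. 1 + gap n / m0) \<longlonglongrightarrow> 1" using tendsto_add[OF tendsto_const tendsto_divide[OF gapt tendsto_const]] m0p by fastforce
  qed
qed


lemma irr_root: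
  fixes lam :: real
  assumes q: "lam \<in> \<rat>" and g: "lam > 1" and d: "d \<ge> 1" and e: "lam ^ (d + 1) = lam ^ d + 1"
  shows False
proof -
  obtain m n :: nat where mn: "n \<noteq> 0" "\<bar>lam\<bar> = real m / real n" "coprime m n"
    using Rats_abs_nat_div_natE[OF q] by metis
  have l: "lam = real m / real n" using mn g by simp
  have np: "real n > 0" using mn by simp
  have mm: "real m = lam * real n" using l np by simp
  have "real m ^ (d + 1) = lam ^ (d + 1) * real n ^ (d + 1)" by (simp add: mm power_mult_distrib)
  also have "\<dots> = (lam ^ d + 1) * real n ^ (d + 1)" using e by simp
  also have "\<dots> = (lam * real n) ^ d * real n + real n ^ (d + 1)" by (simp add: power_mult_distrib algebra_simps)
  also have "\<dots> = real m ^ d * real n + real n ^ (d + 1)" by (simp add: mm)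
  finally have "real m ^ (d + 1) = real m ^ d * real n + real n ^ (d + 1)" .
  then have eq: "m ^ (d + 1) = m ^ d * n + n ^ (d + 1)"
    by (metis (mono_tags) of_nat_add of_nat_mult of_nat_power of_nat_eq_iff)
  have "m dvd m ^ d * n" using d by (simp add: dvd_power)
  moreover have "m dvd m ^ (d + 1)" by simp
  ultimately have "m dvd n ^ (d + 1)" using eq by (metis dvd_add_right_iff)
  moreover have "coprime m (n ^ (d + 1))" using mn(3) by simp
  ultimately have "m = 1" by (metis coprime_common_divisor_nat dvd_refl)
  then have "lam \<le> 1" using l mn(1) by simp
  then show False using g by simp
qed

lemma prod_ratio:
  fixes u :: "nat \<Rightarrow> real"
  assumes pos: "\<And>n. u n > 0"
  shows "(\<Prod>i<k. u (n + i + 1) / u (n + i)) = u (n + k) / u n"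
proof (induction k)
  case 0 then show ?case using pos[of n] by simp
next
  case (Suc k)
  have "(\<Prod>i<Suc k. u (n + i + 1) / u (n + i)) = (u (n + k) / u n) * (u (n + k + 1) / u (n + k))"
    using Suc by simp
  also have "\<dots> = u (n + Suc k) / u n" using pos[of "n + k"] by simp
  finally show ?case .
qed

lemma rec_osc:
  fixes u :: "nat \<Rightarrow> nat" and d :: nat
  assumes d: "d \<ge> 1" and pos: "\<And>n. u n > 0" and rec: "\<And>n. u (n + d + 1) = u (n + d) + u n"
  shows "\<exists>L>0. (\<lambda>n. real (u (n + d)) / real (u n)) \<longlonglongrightarrow> L
     \<and> (\<forall>N. \<exists>n\<ge>N. real (u (n + d)) / real (u n) > L)
     \<and> (\<forall>N. \<exists>n\<ge>N. real (u (n + d)) / real (u n) < L)"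
proof -
  define f :: "real \<Rightarrow> real" where "f y = y ^ (d + 1) - y ^ d - 1" for y
  have "\<exists>y\<ge>1. y \<le> 2 \<and> f y = 0"
  proof (rule IVT')
    show "f 1 \<le> 0" unfolding f_def by simp
    have "(2::real) ^ d \<ge> 1" by simp
    then show "0 \<le> f 2" unfolding f_def by simp
    show "continuous_on {1..2} f" unfolding f_def by (intro continuous_intros)
  qed simp
  then obtain lam where lam: "lam \<ge> 1" "f lam = 0" by blast
  have lam1: "lam > 1" using lam unfolding f_def by (cases "lam = 1") auto
  have lp: "lam > 0" using lam1 by simp
  have le: "lam ^ (d + 1) = lam ^ d + 1" using lam(2) unfolding f_def by simp
  have lpow: "lam ^ d > 0" using lp by simp
  have lam_eq: "lam = 1 + 1 / lam ^ d"
  proof -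
    have "lam * lam ^ d = lam ^ d + 1" using le by simp
    have "1 + 1 / lam ^ d = (lam ^ d + 1) / lam ^ d" using lpow lp by (simp add: add_divide_distrib)
    also have "\<dots> = lam * lam ^ d / lam ^ d" using le by simp
    also have "\<dots> = lam" using lpow by simp
    finally show ?thesis by simp
  qed
  define L where "L = lam ^ d"
  have L0: "L > 0" unfolding L_def using lpow .
  define x where "x n = real (u n) / lam ^ n" for n
  define a where "a = 1 / lam"
  define b where "b = 1 / lam ^ (d + 1)"
  have ab3: "a + b = 1"
  proof -
    have "a = lam ^ d / lam ^ (d + 1)" unfolding a_def using lpow lp by simp
    then have "a + b = (lam ^ d + 1) / lam ^ (d + 1)" unfolding b_def by (simp add: add_divide_distrib)
    also have "\<dots> = 1" by (subst le[symmetric]) (use lp in simp)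
    finally show ?thesis .
  qed
  have ab: "a > 0" "b > 0" "a + b = 1" unfolding a_def b_def using lp ab3 a_def b_def by auto
  have xpos: "x n > 0" for n unfolding x_def using pos[of n] lp by simp
  have xrec: "x (n + d + 1) = a * x (n + d) + b * x n" for n
  proof -
    have "x (n + d + 1) = (real (u (n + d)) + real (u n)) / lam ^ (n + d + 1)"
      unfolding x_def using rec[of n] by simp
    also have "\<dots> = a * x (n + d) + b * x n"
      unfolding a_def b_def x_def using lp by (simp add: field_simps power_add)
    finally show ?thesis .
  qed
  define R where "R n = real (u (n + d)) / real (u n)" for n
  have Rx: "R n = L * (x (n + d) / x n)" for n
    unfolding R_def L_def x_def using lp pos[of n] by (simp add: field_simps power_add)
  have conv: "R \<longlonglongrightarrow> L"
  proof -
    have "(\<lambda>n. L * (x (n + d) / x n)) \<longlonglongrightarrow> L * 1"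
      by (intro tendsto_mult tendsto_const avg_conv[of x a b d]) (use xpos ab xrec in auto)
    moreover have "R = (\<lambda>n. L * (x (n + d) / x n))" by (rule ext) (rule Rx)
    ultimately show ?thesis by simp
  qed
  define r where "r n = real (u (n + 1)) / real (u n)" for n
  have upos: "real (u n) > 0" for n using pos[of n] by simp
  have Rprod: "R n = (\<Prod>i<d. r (n + i))" for n
    unfolding R_def r_def using prod_ratio[where u="\<lambda>n. real (u n)" and k=d and n=n] upos by (simp add: add.assoc)
  have Rpos: "R n > 0" for n unfolding R_def using upos by simp
  have rR: "r (n + d) = 1 + 1 / R n" for n
  proof -
    have "r (n + d) = (real (u (n + d)) + real (u n)) / real (u (n + d))"
      unfolding r_def using rec[of n] by (simp add: add.assoc)
    then show ?thesis unfolding R_def using upos[of n] upos[of "n + d"] by (simp add: field_simps)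
  qed
  have rpos: "r n > 0" for n unfolding r_def using upos by simp
  have noconst: False if "\<forall>m\<ge>N. R m = L" for N
  proof -
    have "r (N + d) = lam" using rR[of N] that lam_eq L_def by simp
    moreover have "r (N + d) \<in> \<rat>" unfolding r_def by simp
    ultimately show False using irr_root[of lam d] lam1 d le by simp
  qed
  have case1: "\<exists>n\<ge>N. R n > L" for N
  proof (rule ccontr)
    assume "\<not> (\<exists>n\<ge>N. R n > L)"
    then have h: "R n \<le> L" if "n \<ge> N" for n using that by (simp add: not_less)
    have rg: "r m \<ge> lam" if "m \<ge> N + d" for m
    proof -
      define n where "n = m - d"
      have n: "m = n + d" "n \<ge> N" using that n_def by auto
      have "1 / L \<le> 1 / R n" using h[OF n(2)] Rpos[of n] by (simp add: frac_le)
      then show ?thesis using rR[of n] n lam_eq L_def by simp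
    qed
    have "\<forall>m\<ge>N + d. R m = L"
    proof (intro allI impI)
      fix m assume m: "m \<ge> N + d"
      have "(\<Prod>i<d. lam) \<le> (\<Prod>i<d. r (m + i))"
        using rg m lam1 by (intro prod_mono) auto
      then have "L \<le> R m" using Rprod[of m] L_def by simp
      then show "R m = L" using h[of m] m by simp
    qed
    then show False using noconst by blast
  qed
  have case2: "\<exists>n\<ge>N. R n < L" for N
  proof (rule ccontr)
    assume "\<not> (\<exists>n\<ge>N. R n < L)"
    then have h: "R n \<ge> L" if "n \<ge> N" for n using that by (simp add: not_less)
    have rg: "r m \<le> lam" if "m \<ge> N + d" for m
    proof -
      define n where "n = m - d"
      have n: "m = n + d" "n \<ge> N" using that n_def by auto
      have "1 / R n \<le> 1 / L" using h[OF n(2)] L0 by (simp add: frac_le)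
      then show ?thesis using rR[of n] n lam_eq L_def by simp
    qed
    have "\<forall>m\<ge>N + d. R m = L"
    proof (intro allI impI)
      fix m assume m: "m \<ge> N + d"
      have "(\<Prod>i<d. r (m + i)) \<le> (\<Prod>i<d. lam)"
        using rg m rpos by (intro prod_mono) (auto simp: less_imp_le)
      then have "R m \<le> L" using Rprod[of m] L_def by simp
      then show "R m = L" using h[of m] m by simp
    qed
    then show False using noconst by blast
  qed
  show ?thesis using L0 conv case1 case2 unfolding R_def by blast
qed


theorem mainTheorem2:
  fixes \<alpha> :: real
  assumes "\<alpha> \<ge> 2"
  shows "\<exists>r1 > 1. (\<lambda>n. Q \<alpha> n) \<longlonglongrightarrow> r1
           \<and> (\<forall>N. \<exists>n\<ge>N. n \<ge> 1 \<and> Q \<alpha> n > r1)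
           \<and> (\<forall>N. \<exists>n\<ge>N. n \<ge> 1 \<and> Q \<alpha> n < r1)"
proof -
  have a1: "\<alpha> \<ge> 1" using assms by simp
  obtain K d where K: "K \<ge> 1" "d \<ge> 1" "\<forall>k\<ge>K. jj \<alpha> k = k - d \<and> d < k"
    using eventual_structure[OF assms] by blast
  define u where "u n = P \<alpha> (n + K)" for n
  have upos: "u n > 0" for n unfolding u_def using P_pos[of "n + K" \<alpha>] K(1) by simp
  have urec: "u (n + d + 1) = u (n + d) + u n" for n
  proof -
    have "P \<alpha> (Suc (n + K + d)) = P \<alpha> (n + K + d) + P \<alpha> (n + K)"
      by (rule window_phat(2)[OF assms K(1) K(3)]) simp
    then show ?thesis unfolding u_def by (simp add: algebra_simps)
  qed
  have Qe: "Q \<alpha> (n + K) = 1 + real (u (n + d)) / real (u n)" for n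
  proof -
    have "Q \<alpha> (n + K) = 1 + real (P \<alpha> (n + K + d)) / real (P \<alpha> (n + K))"
      by (rule window_phat(1)[OF assms K(1) K(3)]) simp
    then show ?thesis unfolding u_def by (simp add: algebra_simps)
  qed
  obtain L where L: "L > 0" "(\<lambda>n. real (u (n + d)) / real (u n)) \<longlonglongrightarrow> L"
    "\<forall>N. \<exists>n\<ge>N. real (u (n + d)) / real (u n) > L"
    "\<forall>N. \<exists>n\<ge>N. real (u (n + d)) / real (u n) < L"
    using rec_osc[of d u, OF K(2) upos urec] by blast
  have c: "(\<lambda>n. Q \<alpha> n) \<longlonglongrightarrow> 1 + L"
  proof (rule LIMSEQ_offset[where k=K])
    have "(\<lambda>n. 1 + real (u (n + d)) / real (u n)) \<longlonglongrightarrow> 1 + L"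
      by (intro tendsto_intros L(2))
    then show "(\<lambda>n. Q \<alpha> (n + K)) \<longlonglongrightarrow> 1 + L" unfolding Qe .
  qed
  have o1: "\<exists>n\<ge>N. n \<ge> 1 \<and> Q \<alpha> n > 1 + L" for N
  proof -
    obtain n where "n \<ge> N" "real (u (n + d)) / real (u n) > L" using L(3) by blast
    then show ?thesis using Qe[of n] K(1) by (intro exI[of _ "n + K"]) auto
  qed
  have o2: "\<exists>n\<ge>N. n \<ge> 1 \<and> Q \<alpha> n < 1 + L" for N
  proof -
    obtain n where "n \<ge> N" "real (u (n + d)) / real (u n) < L" using L(4) by blast
    then show ?thesis using Qe[of n] K(1) by (intro exI[of _ "n + K"]) auto
  qed
  show ?thesis using L(1) c o1 o2 by (intro exI[of _ "1 + L"]) auto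
qed


end
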